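(* Let $H$, $d$, $(X,\mu)$, $\mathcal{A}$, $(N_s)$, $\delta_r,s_r,\sigma_s$ be as in the context and fix an integer $r\ge3$. Fix $0\le\alpha<\beta$ and an integer $s>s_r+r$. Then for any partition $\mathcal{Q}$ of $[r]$, any $\underline h\in\Delta_{\mathcal{Q}}(\alpha,\beta)$ and any $f\in\mathcal{A}$, $$|\psi_{f,\underline h}(I)-\psi^{\mathcal{Q}}_{f,\underline h}(I)|\le C_{r,s}\,e^{-(\beta\delta_r-r\alpha\sigma_s)}N_s(f)^{|I|}\quad\text{for all }I\subset[r],$$ where $C_{r,s}$ depends only on $r$ and $s$.
   Context: $H$ is a locally compact second countable group with left-invariant metric $d$, acting measure-preservingly on a probability space $(X,\mu)$; $h\cdot f=f\circ h^{-1}$. $\mathcal{A}\subset L^\infty(X,\mu)$ is an $H$-invariant subalgebra and $(N_s)_{s\ge1}$ seminorms on it with (constants depending only on $s$): $N_s(f)\ll N_{s+1}(f)$; $\|f\|_{L^\infty}\ll N_s(f)$; $N_s(h\cdot f)\ll e^{\sigma_s d(h,e)}N_s(f)$ for some $\sigma_s>0$; $N_s(f_1f_2)\ll N_{s+1}(f_1)N_{s+1}(f_2)$. Exponential mixing of all orders: for every $k\ge2$ there are $\delta_k>0$ and an integer $s_k>0$ with $\big|\mu(\prod_{i=1}^k h_i\cdot f_i)-\prod_i\mu(f_i)\big|\ll_{k,s}e^{-\delta_k\min_{i\ne j}d(h_i,h_j)}\prod_iN_s(f_i)$ for all $s>s_k$, $f_i\in\mathcal{A}$, $h_i\in H$;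 $(\sigma_s)$, $(s_k)$ increasing, $(\delta_k)$ decreasing, $\delta_k<k\sigma_s$. Distances: $d^I(\underline h)=\max_{i,j\in I}d(h_i,h_j)$, $d_{I,J}(\underline h)=\min_{i\in I,j\in J}d(h_i,h_j)$, $d^{\mathcal{Q}}=\max_{I\in\mathcal{Q}}d^I$, $d_{\mathcal{Q}}=\min\{d_{I,J}:I\ne J\in\mathcal{Q}\}$, $\Delta_{\mathcal{Q}}(\alpha,\beta)=\{\underline h\in H^r:d^{\mathcal{Q}}(\underline h)\le\alpha,\ d_{\mathcal{Q}}(\underline h)>\beta\}$. For $f\in\mathcal{A}$, $\underline h\in H^r$: $\psi_{f,\underline h}(I)=\mu(\prod_{i\in I}h_i\cdot f)$ for $I\ne\emptyset$, $\psi_{f,\underline h}(\emptyset)=1$, and $\psi^{\mathcal{Q}}_{f,\underline h}(I)=\prod_{J\in\mathcal{Q}}\psi_{f,\underline h}(I\cap J)$. *)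

theory Defs
  imports "HOL-Probability.Probability" "HOL-Library.Disjoint_Sets"
begin

text \<open>Group H: a type of class group_add (not necessarily commutative; + is the group law,
  0 the identity e, uminus the inverse), d = dist.  Index set [r] = {1..r}.
  Tuples in H^r are functions nat => 'h of which only indices 1..r are used.\<close>

definition hact :: "('h::group_add \<Rightarrow> 'x \<Rightarrow> 'x) \<Rightarrow> 'h \<Rightarrow> ('x \<Rightarrow> real) \<Rightarrow> ('x \<Rightarrow> real)" where
  "hact act g f = (\<lambda>x. f (act (- g) x))"

definition dup :: "nat set \<Rightarrow> (nat \<Rightarrow> 'h::metric_space) \<Rightarrow> real" where
  "dup I h = Max {dist (h i) (h j) | i j. i \<in> I \<and> j \<in> I}"

definition dlow :: "nat set \<Rightarrow> nat set \<Rightarrow> (nat \<Rightarrow> 'h::metric_space) \<Rightarrow> real" where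
  "dlow I J h = Min {dist (h i) (h j) | i j. i \<in> I \<and> j \<in> J}"

definition dupQ :: "nat set set \<Rightarrow> (nat \<Rightarrow> 'h::metric_space) \<Rightarrow> real" where
  "dupQ Q h = Max ((\<lambda>I. dup I h) ` Q)"

text \<open>d_Q(h) = min { d_{I,J}(h) : I \<noteq> J in Q }, with value +infinity (as an extended real)
  when Q has only one block (minimum over the empty set).\<close>
definition dlowQ :: "nat set set \<Rightarrow> (nat \<Rightarrow> 'h::metric_space) \<Rightarrow> ereal" where
  "dlowQ Q h = (INF IJ \<in> {(I, J). I \<in> Q \<and> J \<in> Q \<and> I \<noteq> J}. ereal (dlow (fst IJ) (snd IJ) h))"

definition DeltaQ :: "nat set set \<Rightarrow> real \<Rightarrow> real \<Rightarrow> (nat \<Rightarrow> 'h::metric_space) set" where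
  "DeltaQ Q \<alpha> \<beta> = {h. dupQ Q h \<le> \<alpha> \<and> dlowQ Q h > ereal \<beta>}"

definition psi :: "'x measure \<Rightarrow> ('h::group_add \<Rightarrow> 'x \<Rightarrow> 'x) \<Rightarrow> ('x \<Rightarrow> real)
    \<Rightarrow> (nat \<Rightarrow> 'h) \<Rightarrow> nat set \<Rightarrow> real" where
  "psi M act f h I = (if I = {} then 1
      else (\<integral>x. (\<Prod>i\<in>I. hact act (h i) f x) \<partial>M))"

definition psiQ :: "'x measure \<Rightarrow> ('h::group_add \<Rightarrow> 'x \<Rightarrow> 'x) \<Rightarrow> ('x \<Rightarrow> real)
    \<Rightarrow> (nat \<Rightarrow> 'h) \<Rightarrow> nat set set \<Rightarrow> nat set \<Rightarrow> real" where
  "psiQ M act f h Q I = (\<Prod>J\<in>Q. psi M act f h (I \<inter> J))"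

end

theory Submission
  imports Defs
begin



lemma N_mono_iter:
  fixes N :: "nat \<Rightarrow> ('x \<Rightarrow> real) \<Rightarrow> real"
  assumes N_nonneg: "\<And>s f. 1 \<le> s \<Longrightarrow> f \<in> A \<Longrightarrow> 0 \<le> N s f"
    and N_mono: "\<And>s. 1 \<le> s \<Longrightarrow> \<exists>C. \<forall>f\<in>A. N s f \<le> C * N (s + 1) f"
    and t: "1 \<le> t"
  shows "\<exists>C\<ge>0. \<forall>f\<in>A. N t f \<le> C * N (t + d) f"
proof (induction d)
  case 0
  show ?case by (intro exI[of _ 1]) auto
next
  case (Suc d)
  then obtain C where C: "C \<ge> 0" "\<forall>f\<in>A. N t f \<le> C * N (t + d) f" by blast
  obtain C' where C': "\<forall>f\<in>A. N (t+d) f \<le> C' * N (t + d + 1) f" using N_mono[of "t+d"] t by auto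
  have "\<forall>f\<in>A. N t f \<le> (C * max C' 0) * N (t + Suc d) f"
  proof
    fix f assume f: "f \<in> A"
    have n: "0 \<le> N (t + d + 1) f" using N_nonneg[OF _ f] t by simp
    have "N (t+d) f \<le> max C' 0 * N (t + d + 1) f"
      using C'[rule_format, OF f] mult_right_mono[OF max.cobounded1[of C' 0] n] by linarith
    hence "C * N (t+d) f \<le> C * (max C' 0 * N (t + d + 1) f)" using C(1) mult_left_mono by blast
    moreover have "N t f \<le> C * N (t+d) f" using C(2) f by blast
    ultimately show "N t f \<le> (C * max C' 0) * N (t + Suc d) f" by (simp add: mult.assoc)
  qed
  thus ?case using C(1) by (intro exI[of _ "C * max C' 0"]) auto
qed

lemma N_mono_le:
  fixes N :: "nat \<Rightarrow> ('x \<Rightarrow> real) \<Rightarrow> real"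
  assumes N_nonneg: "\<And>s f. 1 \<le> s \<Longrightarrow> f \<in> A \<Longrightarrow> 0 \<le> N s f"
    and N_mono: "\<And>s. 1 \<le> s \<Longrightarrow> \<exists>C. \<forall>f\<in>A. N s f \<le> C * N (s + 1) f"
    and t: "1 \<le> t" and tu: "t \<le> u"
  shows "\<exists>C\<ge>0. \<forall>f\<in>A. N t f \<le> C * N u f"
  using N_mono_iter[of A N, OF N_nonneg N_mono t, of "u - t"] tu by simp

lemma prodA:
  assumes A_mult: "\<And>f g. f \<in> A \<Longrightarrow> g \<in> A \<Longrightarrow> (\<lambda>x. f x * g x) \<in> A"
  shows "finite S \<Longrightarrow> S \<noteq> {} \<Longrightarrow> (\<forall>i\<in>S. g i \<in> A) \<Longrightarrow> (\<lambda>x. \<Prod>i\<in>S. g i x) \<in> A"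
proof (induction S rule: finite_ne_induct)
  case (singleton a) then show ?case by simp
next
  case (insert a F)
  have "(\<lambda>x. \<Prod>i\<in>insert a F. g i x) = (\<lambda>x. g a x * (\<Prod>i\<in>F. g i x))"
    using insert by simp
  then show ?case using insert A_mult by simp
qed

lemma prodN:
  fixes N :: "nat \<Rightarrow> ('x \<Rightarrow> real) \<Rightarrow> real"
  assumes N_nonneg: "\<And>s f. 1 \<le> s \<Longrightarrow> f \<in> A \<Longrightarrow> 0 \<le> N s f"
    and N_mono: "\<And>s. 1 \<le> s \<Longrightarrow> \<exists>C. \<forall>f\<in>A. N s f \<le> C * N (s + 1) f"
    and N_mult: "\<And>s. 1 \<le> s \<Longrightarrow> \<exists>C. \<forall>f1\<in>A. \<forall>f2\<in>A.
        N s (\<lambda>x. f1 x * f2 x) \<le> C * N (s + 1) f1 * N (s + 1) f2"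
    and A_mult: "\<And>f g. f \<in> A \<Longrightarrow> g \<in> A \<Longrightarrow> (\<lambda>x. f x * g x) \<in> A"
  shows "1 \<le> n \<Longrightarrow> 1 \<le> t \<Longrightarrow> \<exists>K\<ge>0. \<forall>(S::nat set) g. finite S \<and> card S = n \<and> (\<forall>i\<in>S. g i \<in> A) \<longrightarrow>
     N t (\<lambda>x. \<Prod>i\<in>S. g i x) \<le> K * (\<Prod>i\<in>S. N (t + n - 1) (g i))"
proof (induction n arbitrary: t)
  case 0 then show ?case by simp
next
  case (Suc n t)
  show ?case
  proof (cases "n = 0")
    case True
    have "\<forall>(S::nat set) g. finite S \<and> card S = Suc n \<and> (\<forall>i\<in>S. g i \<in> A) \<longrightarrow>
     N t (\<lambda>x. \<Prod>i\<in>S. g i x) \<le> 1 * (\<Prod>i\<in>S. N (t + Suc n - 1) (g i))"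
    proof (intro allI impI)
      fix S and g :: "nat \<Rightarrow> 'x \<Rightarrow> real"
      assume "finite S \<and> card S = Suc n \<and> (\<forall>i\<in>S. g i \<in> A)"
      then obtain a where "S = {a}" using True card_1_singletonE by auto
      then show "N t (\<lambda>x. \<Prod>i\<in>S. g i x) \<le> 1 * (\<Prod>i\<in>S. N (t + Suc n - 1) (g i))"
        using True by simp
    qed
    then show ?thesis by (intro exI[of _ 1]) auto
  next
    case False
    then obtain K where K: "K \<ge> 0" "\<forall>(S::nat set) g. finite S \<and> card S = n \<and> (\<forall>i\<in>S. g i \<in> A) \<longrightarrow>
     N (t+1) (\<lambda>x. \<Prod>i\<in>S. g i x) \<le> K * (\<Prod>i\<in>S. N (t + 1 + n - 1) (g i))"
      using Suc.IH[of "t+1"] by auto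
    obtain Cm where Cm: "\<forall>f1\<in>A. \<forall>f2\<in>A. N t (\<lambda>x. f1 x * f2 x) \<le> Cm * N (t + 1) f1 * N (t + 1) f2"
      using N_mult Suc.prems by blast
    obtain Co where Co: "Co \<ge> 0" "\<forall>f\<in>A. N (t+1) f \<le> Co * N (t + n) f"
      using N_mono_le[of A N, OF N_nonneg N_mono, of "t+1" "t+n"] False by auto
    have "\<forall>(S::nat set) g. finite S \<and> card S = Suc n \<and> (\<forall>i\<in>S. g i \<in> A) \<longrightarrow>
     N t (\<lambda>x. \<Prod>i\<in>S. g i x) \<le> (max Cm 0 * Co * K) * (\<Prod>i\<in>S. N (t + Suc n - 1) (g i))"
    proof (intro allI impI)
      fix S and g :: "nat \<Rightarrow> 'x \<Rightarrow> real"
      assume S: "finite S \<and> card S = Suc n \<and> (\<forall>i\<in>S. g i \<in> A)"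
      then obtain a S' where aS: "S = insert a S'" "a \<notin> S'" "card S' = n"
        by (metis card_Suc_eq)
      have fS': "finite S'" using S aS by auto
      have S'ne: "S' \<noteq> {}" using aS False by auto
      have ga: "g a \<in> A" using S aS by auto
      have gS': "\<forall>i\<in>S'. g i \<in> A" using S aS by auto
      have PA: "(\<lambda>x. \<Prod>i\<in>S'. g i x) \<in> A" using prodA[OF A_mult fS' S'ne gS'] .
      have eq: "(\<lambda>x. \<Prod>i\<in>S. g i x) = (\<lambda>x. g a x * (\<Prod>i\<in>S'. g i x))"
        using aS fS' by simp
      have n1: "0 \<le> N (t+1) (g a)" using N_nonneg ga by simp
      have n2: "0 \<le> N (t+1) (\<lambda>x. \<Prod>i\<in>S'. g i x)" using N_nonneg PA by simp
      have n3: "0 \<le> (\<Prod>i\<in>S'. N (t + n) (g i))"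
        using N_nonneg gS' Suc.prems by (intro prod_nonneg) auto
      have "N t (\<lambda>x. \<Prod>i\<in>S. g i x) \<le> Cm * N (t + 1) (g a) * N (t + 1) (\<lambda>x. \<Prod>i\<in>S'. g i x)"
        using Cm ga PA eq by simp
      also have "\<dots> \<le> max Cm 0 * N (t + 1) (g a) * N (t + 1) (\<lambda>x. \<Prod>i\<in>S'. g i x)"
        using n1 n2 by (intro mult_right_mono) auto
      also have "\<dots> \<le> max Cm 0 * (Co * N (t + n) (g a)) * (K * (\<Prod>i\<in>S'. N (t + n) (g i)))"
      proof -
        have a: "N (t + 1) (g a) \<le> Co * N (t + n) (g a)" using Co ga by auto
        have b: "N (t + 1) (\<lambda>x. \<Prod>i\<in>S'. g i x) \<le> K * (\<Prod>i\<in>S'. N (t + n) (g i))"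
          using K(2)[rule_format, of S' g] fS' aS gS' False by simp
        show ?thesis using a b n1 n2 by (intro mult_mono) auto
      qed
      also have "\<dots> = max Cm 0 * Co * K * (\<Prod>i\<in>S. N (t + Suc n - 1) (g i))"
        using aS fS' by (simp add: algebra_simps)
      finally show "N t (\<lambda>x. \<Prod>i\<in>S. g i x) \<le> max Cm 0 * Co * K * (\<Prod>i\<in>S. N (t + Suc n - 1) (g i))" .
    qed
    moreover have "0 \<le> max Cm 0 * Co * K" using K Co by simp
    ultimately show ?thesis by blast
  qed
qed


lemma block_bound:
  fixes N :: "nat \<Rightarrow> ('x \<Rightarrow> real) \<Rightarrow> real"
    and act :: "'h::{group_add, metric_space} \<Rightarrow> 'x \<Rightarrow> 'x"
    and \<sigma> :: "nat \<Rightarrow> real"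
  assumes N_nonneg: "\<And>s f. 1 \<le> s \<Longrightarrow> f \<in> A \<Longrightarrow> 0 \<le> N s f"
    and N_mono: "\<And>s. 1 \<le> s \<Longrightarrow> \<exists>C. \<forall>f\<in>A. N s f \<le> C * N (s + 1) f"
    and N_mult: "\<And>s. 1 \<le> s \<Longrightarrow> \<exists>C. \<forall>f1\<in>A. \<forall>f2\<in>A.
        N s (\<lambda>x. f1 x * f2 x) \<le> C * N (s + 1) f1 * N (s + 1) f2"
    and A_mult: "\<And>f g. f \<in> A \<Longrightarrow> g \<in> A \<Longrightarrow> (\<lambda>x. f x * g x) \<in> A"
    and A_inv: "\<And>g f. f \<in> A \<Longrightarrow> hact act g f \<in> A"
    and \<sigma>_pos: "\<And>s. 1 \<le> s \<Longrightarrow> 0 < \<sigma> s"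
    and N_act: "\<And>s. 1 \<le> s \<Longrightarrow> \<exists>C. \<forall>f\<in>A. \<forall>g.
        N s (hact act g f) \<le> C * exp (\<sigma> s * dist g 0) * N s f"
    and \<sigma>_mono: "\<And>s t. 1 \<le> s \<Longrightarrow> s \<le> t \<Longrightarrow> \<sigma> s \<le> \<sigma> t"
    and t: "1 \<le> t" and ts: "t + n - 1 \<le> s" and n: "1 \<le> n"
  shows "\<exists>D\<ge>0. \<forall>\<alpha> (S::nat set) c f. 0 \<le> \<alpha> \<longrightarrow> finite S \<longrightarrow> card S = n \<longrightarrow> f \<in> A \<longrightarrow>
     (\<forall>i\<in>S. dist (c i) (0::'h) \<le> \<alpha>) \<longrightarrow>
     N t (\<lambda>x. \<Prod>i\<in>S. hact act (c i) f x) \<le> D * exp (real n * \<sigma> s * \<alpha>) * N s f ^ n"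
proof -
  define u where "u = t + n - 1"
  have u1: "1 \<le> u" and us: "u \<le> s" using t n ts by (auto simp: u_def)
  obtain K where K: "K \<ge> 0" "\<forall>(S::nat set) g. finite S \<and> card S = n \<and> (\<forall>i\<in>S. g i \<in> A) \<longrightarrow>
     N t (\<lambda>x. \<Prod>i\<in>S. g i x) \<le> K * (\<Prod>i\<in>S. N u (g i))"
    using prodN[of A N, OF N_nonneg N_mono N_mult A_mult n t] unfolding u_def by blast
  obtain Ca where Ca: "\<forall>f\<in>A. \<forall>g. N u (hact act g f) \<le> Ca * exp (\<sigma> u * dist g 0) * N u f"
    using N_act u1 by blast
  obtain Cm where Cm: "Cm \<ge> 0" "\<forall>f\<in>A. N u f \<le> Cm * N s f"
    using N_mono_le[of A N, OF N_nonneg N_mono u1 us] by blast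
  define D where "D = K * (max Ca 0 * Cm) ^ n"
  have "\<forall>\<alpha> (S::nat set) c f. 0 \<le> \<alpha> \<longrightarrow> finite S \<longrightarrow> card S = n \<longrightarrow> f \<in> A \<longrightarrow>
     (\<forall>i\<in>S. dist (c i) (0::'h) \<le> \<alpha>) \<longrightarrow>
     N t (\<lambda>x. \<Prod>i\<in>S. hact act (c i) f x) \<le> D * exp (real n * \<sigma> s * \<alpha>) * N s f ^ n"
  proof (intro allI impI)
    fix \<alpha> :: real and S :: "nat set" and c :: "nat \<Rightarrow> 'h" and f
    assume a0: "0 \<le> \<alpha>" and fS: "finite S" and cS: "card S = n" and f: "f \<in> A"
      and dc: "\<forall>i\<in>S. dist (c i) (0::'h) \<le> \<alpha>"
    have s1: "1 \<le> s" using u1 us by simp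
    have Nuf: "0 \<le> N u f" using N_nonneg u1 f by simp
    have Nsf: "0 \<le> N s f" using N_nonneg s1 f by simp
    have one: "N u (hact act (c i) f) \<le> max Ca 0 * exp (\<sigma> s * \<alpha>) * Cm * N s f" if i: "i \<in> S" for i
    proof -
      have "N u (hact act (c i) f) \<le> Ca * exp (\<sigma> u * dist (c i) 0) * N u f" using Ca f by blast
      also have "\<dots> \<le> max Ca 0 * exp (\<sigma> u * dist (c i) 0) * N u f"
        using Nuf by (intro mult_right_mono) auto
      also have "\<dots> \<le> max Ca 0 * exp (\<sigma> s * \<alpha>) * (Cm * N s f)"
      proof (rule mult_mono)
        have "\<sigma> u * dist (c i) 0 \<le> \<sigma> u * \<alpha>"
          using dc i \<sigma>_pos[OF u1] by (intro mult_left_mono) auto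
        also have "\<dots> \<le> \<sigma> s * \<alpha>" using \<sigma>_mono[OF u1 us] a0 by (intro mult_right_mono) auto
        finally show "max Ca 0 * exp (\<sigma> u * dist (c i) 0) \<le> max Ca 0 * exp (\<sigma> s * \<alpha>)"
          by (intro mult_left_mono) auto
        show "N u f \<le> Cm * N s f" using Cm f by blast
      qed (use Nuf in auto)
      finally show ?thesis by (simp add: mult.assoc)
    qed
    have hA: "\<forall>i\<in>S. hact act (c i) f \<in> A" using A_inv[OF f] by simp
    have "N t (\<lambda>x. \<Prod>i\<in>S. hact act (c i) f x) \<le> K * (\<Prod>i\<in>S. N u (hact act (c i) f))"
      using K(2)[rule_format, of S "\<lambda>i. hact act (c i) f"] fS cS hA by blast
    also have "\<dots> \<le> K * (\<Prod>i\<in>S. max Ca 0 * exp (\<sigma> s * \<alpha>) * Cm * N s f)"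
      using one hA N_nonneg u1 K(1) by (intro mult_left_mono prod_mono) auto
    also have "\<dots> = K * (max Ca 0 * exp (\<sigma> s * \<alpha>) * Cm * N s f) ^ n"
      using cS by simp
    also have "\<dots> = K * (max Ca 0 * Cm) ^ n * exp (\<sigma> s * \<alpha>) ^ n * N s f ^ n"
      unfolding power_mult_distrib by (simp only: mult_ac)
    also have "exp (\<sigma> s * \<alpha>) ^ n = exp (real n * \<sigma> s * \<alpha>)"
      using exp_of_nat_mult[of n "\<sigma> s * \<alpha>"] by (simp only: mult.assoc)
    finally show "N t (\<lambda>x. \<Prod>i\<in>S. hact act (c i) f x) \<le> D * exp (real n * \<sigma> s * \<alpha>) * N s f ^ n"
      by (simp add: D_def)
  qed
  moreover have "D \<ge> 0" using K Cm by (simp add: D_def)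
  ultimately show ?thesis by blast
qed


lemma hact_shift:
  fixes act :: "'h::group_add \<Rightarrow> 'x \<Rightarrow> 'x"
  assumes act_plus: "\<And>g g' x. x \<in> space M \<Longrightarrow> act (g + g') x = act g (act g' x)"
    and x: "x \<in> space M"
  shows "hact act g (\<lambda>y. \<Prod>i\<in>T. hact act (- g + c i) f y) x = (\<Prod>i\<in>T. hact act (c i) f x)"
  unfolding hact_def
  by (simp add: act_plus[OF x, symmetric] minus_add add.assoc)

lemma integral_hact:
  fixes act :: "'h::group_add \<Rightarrow> 'x \<Rightarrow> 'x"
  assumes act_mp: "\<And>g. act g \<in> measurable M M \<and> distr M M (act g) = M"
    and f: "f \<in> borel_measurable M"
  shows "(\<integral>x. hact act c f x \<partial>M) = (\<integral>x. f x \<partial>M)"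
proof -
  have "(\<integral>x. f x \<partial>M) = integral\<^sup>L (distr M M (act (- c))) f" using act_mp by simp
  also have "\<dots> = (\<integral>x. f (act (- c) x) \<partial>M)" using integral_distr[OF _ f] act_mp by blast
  finally show ?thesis by (simp add: hact_def)
qed

lemma dist_shift:
  fixes g x :: "'h::{group_add, metric_space}"
  assumes d_leftinv: "\<And>g x y::'h. dist (g + x) (g + y) = dist x y"
  shows "dist (- g + x) 0 = dist x g"
  using d_leftinv[of g "- g + x" 0] by (simp add: add.assoc[symmetric])

lemma finite_unif:
  fixes P :: "'a \<Rightarrow> real \<Rightarrow> bool"
  assumes "finite S" "\<forall>n\<in>S. \<exists>D\<ge>0. P n D" "\<And>n D D'. n \<in> S \<Longrightarrow> P n D \<Longrightarrow> D \<le> D' \<Longrightarrow> P n D'"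
  shows "\<exists>D\<ge>0. \<forall>n\<in>S. P n D"
proof -
  obtain g where g: "\<forall>n\<in>S. g n \<ge> 0 \<and> P n (g n)" using assms(2) by metis
  have "\<forall>n\<in>S. P n (\<Sum>m\<in>S. g m)"
  proof
    fix n assume n: "n \<in> S"
    have "g n \<le> (\<Sum>m\<in>S. g m)" using g n assms(1) by (intro member_le_sum) auto
    thus "P n (\<Sum>m\<in>S. g m)" using assms(3) g n by blast
  qed
  moreover have "(\<Sum>m\<in>S. g m) \<ge> 0" using g by (intro sum_nonneg) auto
  ultimately show ?thesis by blast
qed



theorem lemma9p1:
  fixes M :: "'x measure"
    and act :: "'h::{group_add, metric_space, second_countable_topology} \<Rightarrow> 'x \<Rightarrow> 'x"
    and A :: "('x \<Rightarrow> real) set"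
    and N :: "nat \<Rightarrow> ('x \<Rightarrow> real) \<Rightarrow> real"
    and \<sigma> :: "nat \<Rightarrow> real" and \<delta> :: "nat \<Rightarrow> real" and sk :: "nat \<Rightarrow> nat"
    and r s :: nat
  assumes
    \<comment> \<open>H: locally compact second countable topological group, left-invariant metric\<close>
    H_lc: "locally compact (UNIV :: 'h set)"
    and H_plus_cont: "continuous_on UNIV (\<lambda>p::'h \<times> 'h. fst p + snd p)"
    and H_inv_cont: "continuous_on UNIV (\<lambda>g::'h. - g)"
    and d_leftinv: "\<And>g x y::'h. dist (g + x) (g + y) = dist x y"
    \<comment> \<open>measure-preserving action on a probability space\<close>
    and M_prob: "prob_space M"
    and act_zero: "\<And>x. x \<in> space M \<Longrightarrow> act 0 x = x"
    and act_plus: "\<And>g g' x. x \<in> space M \<Longrightarrow> act (g + g') x = act g (act g' x)"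
    and act_meas: "(\<lambda>p. act (fst p) (snd p)) \<in> measurable (borel \<Otimes>\<^sub>M M) M"
    and act_mp: "\<And>g. act g \<in> measurable M M \<and> distr M M (act g) = M"
    \<comment> \<open>A: H-invariant subalgebra of L^infinity\<close>
    and A_Linf: "\<And>f. f \<in> A \<Longrightarrow> f \<in> borel_measurable M \<and> (\<exists>B. AE x in M. \<bar>f x\<bar> \<le> B)"
    and A_zero: "(\<lambda>x. 0) \<in> A"
    and A_add: "\<And>f g. f \<in> A \<Longrightarrow> g \<in> A \<Longrightarrow> (\<lambda>x. f x + g x) \<in> A"
    and A_scale: "\<And>c f. f \<in> A \<Longrightarrow> (\<lambda>x. c * f x) \<in> A"
    and A_mult: "\<And>f g. f \<in> A \<Longrightarrow> g \<in> A \<Longrightarrow> (\<lambda>x. f x * g x) \<in> A"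
    and A_inv: "\<And>g f. f \<in> A \<Longrightarrow> hact act g f \<in> A"
    \<comment> \<open>(N_s)_{s >= 1} seminorms on A\<close>
    and N_nonneg: "\<And>s f. 1 \<le> s \<Longrightarrow> f \<in> A \<Longrightarrow> 0 \<le> N s f"
    and N_triangle: "\<And>s f g. 1 \<le> s \<Longrightarrow> f \<in> A \<Longrightarrow> g \<in> A \<Longrightarrow>
        N s (\<lambda>x. f x + g x) \<le> N s f + N s g"
    and N_homog: "\<And>s c f. 1 \<le> s \<Longrightarrow> f \<in> A \<Longrightarrow> N s (\<lambda>x. c * f x) = \<bar>c\<bar> * N s f"
    \<comment> \<open>properties of N_s, with constants depending only on s\<close>
    and N_mono: "\<And>s. 1 \<le> s \<Longrightarrow> \<exists>C. \<forall>f\<in>A. N s f \<le> C * N (s + 1) f"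
    and N_Linf: "\<And>s. 1 \<le> s \<Longrightarrow> \<exists>C. \<forall>f\<in>A. AE x in M. \<bar>f x\<bar> \<le> C * N s f"
    and \<sigma>_pos: "\<And>s. 1 \<le> s \<Longrightarrow> 0 < \<sigma> s"
    and N_act: "\<And>s. 1 \<le> s \<Longrightarrow> \<exists>C. \<forall>f\<in>A. \<forall>g.
        N s (hact act g f) \<le> C * exp (\<sigma> s * dist g 0) * N s f"
    and N_mult: "\<And>s. 1 \<le> s \<Longrightarrow> \<exists>C. \<forall>f1\<in>A. \<forall>f2\<in>A.
        N s (\<lambda>x. f1 x * f2 x) \<le> C * N (s + 1) f1 * N (s + 1) f2"
    \<comment> \<open>exponential mixing of all orders\<close>
    and \<delta>_pos: "\<And>k. 2 \<le> k \<Longrightarrow> 0 < \<delta> k"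
    and sk_pos: "\<And>k. 2 \<le> k \<Longrightarrow> 0 < sk k"
    and mixing: "\<And>k s. 2 \<le> k \<Longrightarrow> sk k < s \<Longrightarrow> \<exists>C. \<forall>fs hs. (\<forall>i\<in>{1..k}. fs i \<in> A) \<longrightarrow>
        \<bar>(\<integral>x. (\<Prod>i\<in>{1..k}. hact act (hs i) (fs i) x) \<partial>M) - (\<Prod>i\<in>{1..k}. (\<integral>x. fs i x \<partial>M))\<bar>
        \<le> C * exp (- \<delta> k * Min {dist (hs i) (hs j) | i j. i \<in> {1..k} \<and> j \<in> {1..k} \<and> i \<noteq> j})
            * (\<Prod>i\<in>{1..k}. N s (fs i))"
    and \<sigma>_mono: "\<And>s t. 1 \<le> s \<Longrightarrow> s \<le> t \<Longrightarrow> \<sigma> s \<le> \<sigma> t"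
    and sk_mono: "\<And>k l. 2 \<le> k \<Longrightarrow> k \<le> l \<Longrightarrow> sk k \<le> sk l"
    and \<delta>_antimono: "\<And>k l. 2 \<le> k \<Longrightarrow> k \<le> l \<Longrightarrow> \<delta> l \<le> \<delta> k"
    and \<delta>_lt: "\<And>k s. 2 \<le> k \<Longrightarrow> 1 \<le> s \<Longrightarrow> \<delta> k < real k * \<sigma> s"
    \<comment> \<open>the data of the lemma\<close>
    and r3: "3 \<le> r"
    and s_big: "sk r + r < s"
  shows "\<exists>C. \<forall>\<alpha> \<beta> Q h f I. 0 \<le> \<alpha> \<longrightarrow> \<alpha> < \<beta> \<longrightarrow> partition_on {1..r} Q \<longrightarrow>
      h \<in> DeltaQ Q \<alpha> \<beta> \<longrightarrow> f \<in> A \<longrightarrow> I \<subseteq> {1..r} \<longrightarrow>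
      \<bar>psi M act f h I - psiQ M act f h Q I\<bar>
        \<le> C * exp (- (\<beta> * \<delta> r - real r * \<alpha> * \<sigma> s)) * N s f ^ card I"
  proof -
  define s0 where "s0 = sk r + 1"
  have r2: "2 \<le> r" using r3 by simp
  have s01: "1 \<le> s0" by (simp add: s0_def)
  have s1: "1 \<le> s" using s_big by simp
  have \<sigma>s: "0 < \<sigma> s" using \<sigma>_pos s1 by blast
  have \<delta>r: "0 < \<delta> r" using \<delta>_pos r2 by blast
  have "\<forall>n\<in>{1..r}. \<exists>D\<ge>0. \<forall>\<alpha> (S::nat set) c f. 0 \<le> \<alpha> \<longrightarrow> finite S \<longrightarrow> card S = n \<longrightarrow> f \<in> A \<longrightarrow>
     (\<forall>i\<in>S. dist (c i) (0::'h) \<le> \<alpha>) \<longrightarrow>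
     N s0 (\<lambda>x. \<Prod>i\<in>S. hact act (c i) f x) \<le> D * exp (real n * \<sigma> s * \<alpha>) * N s f ^ n"
  proof
    fix n assume n: "n \<in> {1..r}"
    show "\<exists>D\<ge>0. \<forall>\<alpha> (S::nat set) c f. 0 \<le> \<alpha> \<longrightarrow> finite S \<longrightarrow> card S = n \<longrightarrow> f \<in> A \<longrightarrow>
     (\<forall>i\<in>S. dist (c i) (0::'h) \<le> \<alpha>) \<longrightarrow>
     N s0 (\<lambda>x. \<Prod>i\<in>S. hact act (c i) f x) \<le> D * exp (real n * \<sigma> s * \<alpha>) * N s f ^ n"
    proof (rule block_bound[of A N act \<sigma> s0 n s, OF N_nonneg N_mono N_mult A_mult A_inv \<sigma>_pos N_act \<sigma>_mono s01])
      show "s0 + n - 1 \<le> s" using n s_big by (simp add: s0_def)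
      show "1 \<le> n" using n by simp
    qed
  qed
  note exDb = this
  have "\<exists>Db\<ge>0. \<forall>n\<in>{1..r}. \<forall>\<alpha> (S::nat set) c f. 0 \<le> \<alpha> \<longrightarrow> finite S \<longrightarrow> card S = n \<longrightarrow> f \<in> A \<longrightarrow>
     (\<forall>i\<in>S. dist (c i) (0::'h) \<le> \<alpha>) \<longrightarrow>
     N s0 (\<lambda>x. \<Prod>i\<in>S. hact act (c i) f x) \<le> Db * exp (real n * \<sigma> s * \<alpha>) * N s f ^ n"
  proof (rule finite_unif, simp, rule exDb, intro allI impI)
    fix n D D' \<alpha> and S :: "nat set" and c :: "nat \<Rightarrow> 'h" and f
    assume n: "n \<in> {1..r}" and P: "\<forall>\<alpha> (S::nat set) c f. 0 \<le> \<alpha> \<longrightarrow> finite S \<longrightarrow> card S = n \<longrightarrow> f \<in> A \<longrightarrow>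
     (\<forall>i\<in>S. dist (c i) (0::'h) \<le> \<alpha>) \<longrightarrow>
     N s0 (\<lambda>x. \<Prod>i\<in>S. hact act (c i) f x) \<le> D * exp (real n * \<sigma> s * \<alpha>) * N s f ^ n"
      and DD: "D \<le> D'" and h: "0 \<le> \<alpha>" "finite S" "card S = n" "f \<in> A" "\<forall>i\<in>S. dist (c i) 0 \<le> \<alpha>"
    have "0 \<le> exp (real n * \<sigma> s * \<alpha>) * N s f ^ n" using N_nonneg[OF s1 h(4)] by simp
    hence H: "D * (exp (real n * \<sigma> s * \<alpha>) * N s f ^ n) \<le> D' * (exp (real n * \<sigma> s * \<alpha>) * N s f ^ n)"
      using DD by (intro mult_right_mono)
    note Pi = mp[OF mp[OF mp[OF mp[OF mp[OF spec[OF spec[OF spec[OF spec[OF P, of \<alpha>], of S], of c], of f] h(1)] h(2)] h(3)] h(4)] h(5)]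
    show "N s0 (\<lambda>x. \<Prod>i\<in>S. hact act (c i) f x) \<le> D' * exp (real n * \<sigma> s * \<alpha>) * N s f ^ n"
      using Pi H by (simp only: mult.assoc)
  qed
  then obtain Db where Db: "Db \<ge> 0" "\<forall>n\<in>{1..r}. \<forall>\<alpha> (S::nat set) c f. 0 \<le> \<alpha> \<longrightarrow> finite S \<longrightarrow> card S = n \<longrightarrow> f \<in> A \<longrightarrow>
     (\<forall>i\<in>S. dist (c i) (0::'h) \<le> \<alpha>) \<longrightarrow>
     N s0 (\<lambda>x. \<Prod>i\<in>S. hact act (c i) f x) \<le> Db * exp (real n * \<sigma> s * \<alpha>) * N s f ^ n" by blast
  have "\<forall>k\<in>{2..r}. \<exists>E\<ge>0. \<forall>fs hs. (\<forall>i\<in>{1..k}. fs i \<in> A) \<longrightarrow>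
        \<bar>(\<integral>x. (\<Prod>i\<in>{1..k}. hact act (hs i) (fs i) x) \<partial>M) - (\<Prod>i\<in>{1..k}. (\<integral>x. fs i x \<partial>M))\<bar>
        \<le> E * exp (- \<delta> k * Min {dist (hs i) (hs j) | i j. i \<in> {1..k} \<and> j \<in> {1..k} \<and> i \<noteq> j})
            * (\<Prod>i\<in>{1..k}. N s0 (fs i))"
  proof
    fix k assume k: "k \<in> {2..r}"
    have "sk k < s0" using sk_mono[of k r] k by (auto simp: s0_def)
    then obtain E where E: "\<forall>fs hs. (\<forall>i\<in>{1..k}. fs i \<in> A) \<longrightarrow>
        \<bar>(\<integral>x. (\<Prod>i\<in>{1..k}. hact act (hs i) (fs i) x) \<partial>M) - (\<Prod>i\<in>{1..k}. (\<integral>x. fs i x \<partial>M))\<bar>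
        \<le> E * exp (- \<delta> k * Min {dist (hs i) (hs j) | i j. i \<in> {1..k} \<and> j \<in> {1..k} \<and> i \<noteq> j})
            * (\<Prod>i\<in>{1..k}. N s0 (fs i))" using mixing[of k s0] k by auto
    show "\<exists>E\<ge>0. \<forall>fs hs. (\<forall>i\<in>{1..k}. fs i \<in> A) \<longrightarrow>
        \<bar>(\<integral>x. (\<Prod>i\<in>{1..k}. hact act (hs i) (fs i) x) \<partial>M) - (\<Prod>i\<in>{1..k}. (\<integral>x. fs i x \<partial>M))\<bar>
        \<le> E * exp (- \<delta> k * Min {dist (hs i) (hs j) | i j. i \<in> {1..k} \<and> j \<in> {1..k} \<and> i \<noteq> j})
            * (\<Prod>i\<in>{1..k}. N s0 (fs i))"
    proof (intro exI[of _ "max E 0"] conjI allI impI)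
      fix fs :: "nat \<Rightarrow> 'x \<Rightarrow> real" and hs :: "nat \<Rightarrow> 'h"
      assume fs: "\<forall>i\<in>{1..k}. fs i \<in> A"
      have "0 \<le> exp (- \<delta> k * Min {dist (hs i) (hs j) | i j. i \<in> {1..k} \<and> j \<in> {1..k} \<and> i \<noteq> j})
            * (\<Prod>i\<in>{1..k}. N s0 (fs i))" using fs N_nonneg s01 by (intro mult_nonneg_nonneg prod_nonneg exp_ge_zero) auto
      then show "\<bar>(\<integral>x. (\<Prod>i\<in>{1..k}. hact act (hs i) (fs i) x) \<partial>M) - (\<Prod>i\<in>{1..k}. (\<integral>x. fs i x \<partial>M))\<bar>
        \<le> max E 0 * exp (- \<delta> k * Min {dist (hs i) (hs j) | i j. i \<in> {1..k} \<and> j \<in> {1..k} \<and> i \<noteq> j})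
            * (\<Prod>i\<in>{1..k}. N s0 (fs i))"
        using mp[OF spec[OF spec[OF E, of fs], of hs] fs] mult_right_mono[OF max.cobounded1[of E 0]]
        by (smt (verit, ccfv_SIG) mult.assoc)
    qed simp
  qed
  note exEm = this
  have "\<exists>Em\<ge>0. \<forall>k\<in>{2..r}. \<forall>fs hs. (\<forall>i\<in>{1..k}. fs i \<in> A) \<longrightarrow>
        \<bar>(\<integral>x. (\<Prod>i\<in>{1..k}. hact act (hs i) (fs i) x) \<partial>M) - (\<Prod>i\<in>{1..k}. (\<integral>x. fs i x \<partial>M))\<bar>
        \<le> Em * exp (- \<delta> k * Min {dist (hs i) (hs j) | i j. i \<in> {1..k} \<and> j \<in> {1..k} \<and> i \<noteq> j})
            * (\<Prod>i\<in>{1..k}. N s0 (fs i))"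
  proof (rule finite_unif, simp, rule exEm, intro allI impI)
    fix k E E' and fs :: "nat \<Rightarrow> 'x \<Rightarrow> real" and hs :: "nat \<Rightarrow> 'h"
    assume k: "k \<in> {2..r}" and P: "\<forall>fs hs. (\<forall>i\<in>{1..k}. fs i \<in> A) \<longrightarrow>
        \<bar>(\<integral>x. (\<Prod>i\<in>{1..k}. hact act (hs i) (fs i) x) \<partial>M) - (\<Prod>i\<in>{1..k}. (\<integral>x. fs i x \<partial>M))\<bar>
        \<le> E * exp (- \<delta> k * Min {dist (hs i) (hs j) | i j. i \<in> {1..k} \<and> j \<in> {1..k} \<and> i \<noteq> j})
            * (\<Prod>i\<in>{1..k}. N s0 (fs i))" and EE: "E \<le> E'" and fs: "\<forall>i\<in>{1..k}. fs i \<in> A"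
    have "0 \<le> exp (- \<delta> k * Min {dist (hs i) (hs j) | i j. i \<in> {1..k} \<and> j \<in> {1..k} \<and> i \<noteq> j})
            * (\<Prod>i\<in>{1..k}. N s0 (fs i))" using fs N_nonneg s01 by (intro mult_nonneg_nonneg prod_nonneg exp_ge_zero) auto
    then show "\<bar>(\<integral>x. (\<Prod>i\<in>{1..k}. hact act (hs i) (fs i) x) \<partial>M) - (\<Prod>i\<in>{1..k}. (\<integral>x. fs i x \<partial>M))\<bar>
        \<le> E' * exp (- \<delta> k * Min {dist (hs i) (hs j) | i j. i \<in> {1..k} \<and> j \<in> {1..k} \<and> i \<noteq> j})
            * (\<Prod>i\<in>{1..k}. N s0 (fs i))"
      using mp[OF spec[OF spec[OF P, of fs], of hs] fs] mult_right_mono[OF EE]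
      by (smt (verit, ccfv_SIG) mult.assoc)
  qed
  then obtain Em where Em: "Em \<ge> 0" "\<forall>k\<in>{2..r}. \<forall>fs hs. (\<forall>i\<in>{1..k}. fs i \<in> A) \<longrightarrow>
        \<bar>(\<integral>x. (\<Prod>i\<in>{1..k}. hact act (hs i) (fs i) x) \<partial>M) - (\<Prod>i\<in>{1..k}. (\<integral>x. fs i x \<partial>M))\<bar>
        \<le> Em * exp (- \<delta> k * Min {dist (hs i) (hs j) | i j. i \<in> {1..k} \<and> j \<in> {1..k} \<and> i \<noteq> j})
            * (\<Prod>i\<in>{1..k}. N s0 (fs i))" by blast
  define B where "B = max 1 Db"
  have B1: "1 \<le> B" by (simp add: B_def)
  define C where "C = Em * B ^ r"
  have C0: "0 \<le> C" using Em B1 by (simp add: C_def)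
  show ?thesis
  proof (intro exI[of _ C] allI impI)
    fix \<alpha> \<beta> :: real and Q :: "nat set set" and h :: "nat \<Rightarrow> 'h" and f and I :: "nat set"
    assume a0: "0 \<le> \<alpha>" and ab: "\<alpha> < \<beta>" and part: "partition_on {1..r} Q"
      and hD: "h \<in> DeltaQ Q \<alpha> \<beta>" and f: "f \<in> A" and IS: "I \<subseteq> {1..r}"
    show "\<bar>psi M act f h I - psiQ M act f h Q I\<bar>
        \<le> C * exp (- (\<beta> * \<delta> r - real r * \<alpha> * \<sigma> s)) * N s f ^ card I"
      proof -
    have QU: "\<Union>Q = {1..r}" and Qdisj: "disjoint Q" and Qne: "{} \<notin> Q"
      using part by (auto simp: partition_on_def)
    have finQ: "finite Q" using QU by (metis finite_UnionD finite_atLeastAtMost)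
    have finJ: "\<And>J. J \<in> Q \<Longrightarrow> finite J" using QU
      by (metis Union_upper finite_atLeastAtMost finite_subset)
    have Qdisj2: "\<And>J J'. J \<in> Q \<Longrightarrow> J' \<in> Q \<Longrightarrow> J \<noteq> J' \<Longrightarrow> J \<inter> J' = {}"
      using Qdisj by (auto simp: disjoint_def)
    have finI: "finite I" using IS finite_subset by blast
    have Nf: "0 \<le> N s f" using N_nonneg[OF s1 f] .
    have dupJ: "dist (h i) (h j) \<le> \<alpha>" if J: "J \<in> Q" "i \<in> J" "j \<in> J" for J i j
    proof -
      have fin: "finite {dist (h i) (h j) | i j. i \<in> J \<and> j \<in> J}"
      proof -
        have "{dist (h i) (h j) | i j. i \<in> J \<and> j \<in> J} = (\<lambda>(i,j). dist (h i) (h j)) ` (J \<times> J)" by auto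
        thus ?thesis using finJ[OF J(1)] by simp
      qed
      have "dist (h i) (h j) \<le> dup J h" unfolding dup_def using fin J by (intro Max_ge) auto
      also have "dup J h \<le> dupQ Q h" unfolding dupQ_def using finQ J by (intro Max_ge) auto
      also have "\<dots> \<le> \<alpha>" using hD by (simp add: DeltaQ_def)
      finally show ?thesis .
    qed
    have dlowJ: "\<beta> < dist (h i) (h j)" if J: "J \<in> Q" "J' \<in> Q" "J \<noteq> J'" "i \<in> J" "j \<in> J'" for J J' i j
    proof -
      have fin: "finite {dist (h i) (h j) | i j. i \<in> J \<and> j \<in> J'}"
      proof -
        have "{dist (h i) (h j) | i j. i \<in> J \<and> j \<in> J'} = (\<lambda>(i,j). dist (h i) (h j)) ` (J \<times> J')" by auto
        thus ?thesis using finJ J by simp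
      qed
      have "ereal \<beta> < dlowQ Q h" using hD by (simp add: DeltaQ_def)
      also have "dlowQ Q h \<le> ereal (dlow J J' h)" unfolding dlowQ_def
        by (rule INF_lower2[of "(J, J')"]) (use J in auto)
      finally have "\<beta> < dlow J J' h" by simp
      also have "dlow J J' h \<le> dist (h i) (h j)" unfolding dlow_def using fin J by (intro Min_le) auto
      finally show ?thesis .
    qed
    define Q' where "Q' = {J\<in>Q. I \<inter> J \<noteq> {}}"
    have finQ': "finite Q'" using finQ by (simp add: Q'_def)
    have Q'Q: "Q' \<subseteq> Q" by (auto simp: Q'_def)
    define k where "k = card Q'"
    define rep where "rep J = (SOME i. i \<in> I \<inter> J)" for J
    have rep: "rep J \<in> I \<inter> J" if "J \<in> Q'" for J
    proof -
      have "\<exists>i. i \<in> I \<inter> J" using that by (auto simp: Q'_def)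
      then show ?thesis unfolding rep_def by (rule someI_ex)
    qed
    have I_eq: "I = (\<Union>J\<in>Q'. I \<inter> J)" using IS QU unfolding Q'_def by blast
    have psiQ_eq: "psiQ M act f h Q I = (\<Prod>J\<in>Q'. psi M act f h (I \<inter> J))"
      unfolding psiQ_def using finQ by (intro prod.mono_neutral_right) (auto simp: Q'_def psi_def)
    have RHS0: "0 \<le> C * exp (- (\<beta> * \<delta> r - real r * \<alpha> * \<sigma> s)) * N s f ^ card I"
      using C0 Nf by simp
    show "\<bar>psi M act f h I - psiQ M act f h Q I\<bar>
        \<le> C * exp (- (\<beta> * \<delta> r - real r * \<alpha> * \<sigma> s)) * N s f ^ card I"
    proof (cases "k \<le> 1")
      case True
      have "psi M act f h I = psiQ M act f h Q I"
      proof (cases "k = 0")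
        case True
        then have "Q' = {}" using finQ' by (simp add: k_def)
        then have "I = {}" using I_eq by blast
        then have "psi M act f h I = 1" unfolding psi_def by simp
        moreover have "psiQ M act f h Q I = 1" using psiQ_eq \<open>Q' = {}\<close> by simp
        ultimately show ?thesis by simp
      next
        case False
        with True have "k = 1" by simp
        then obtain J0 where J0: "Q' = {J0}" by (auto simp: k_def card_1_singleton_iff)
        then have "I \<inter> J0 = I" using I_eq by blast
        then show ?thesis using psiQ_eq J0 by simp
      qed
      then show ?thesis using RHS0 by simp
    next
      case False
      then have k2: "2 \<le> k" by simp
      have injrep: "inj_on rep Q'"
      proof (rule inj_onI)
        fix J J' assume J: "J \<in> Q'" "J' \<in> Q'" "rep J = rep J'"
        then have "rep J \<in> J \<inter> J'" using rep[of J] rep[of J'] by auto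
        then show "J = J'" using Qdisj2[of J J'] J Q'Q by blast
      qed
      have "k = card (rep ` Q')" using card_image[OF injrep] by (simp add: k_def)
      also have "\<dots> \<le> card I" using rep finI by (intro card_mono) auto
      also have "\<dots> \<le> r" using card_mono[OF _ IS] by simp
      finally have kr: "k \<le> r" .
      have cIr: "card I \<le> r" using card_mono[OF _ IS] by simp
      obtain e where e: "bij_betw e {1..k} Q'" using ex_bij_betw_nat_finite_1[OF finQ'] by (auto simp: k_def)
      have eQ: "e i \<in> Q'" if "i \<in> {1..k}" for i using e that by (rule bij_betw_apply)
      define G where "G J = (\<lambda>x. \<Prod>i\<in>I \<inter> J. hact act (- h (rep J) + h i) f x)" for J
      define fs where "fs i = G (e i)" for i
      define hs where "hs i = h (rep (e i))" for i
      have GA: "G J \<in> A" if J: "J \<in> Q'" for J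
      proof -
        have "finite (I \<inter> J)" using finI by simp
        moreover have "I \<inter> J \<noteq> {}" using J by (simp add: Q'_def)
        ultimately show ?thesis unfolding G_def using A_inv f
          by (intro prodA[of A]) (auto intro: A_mult)
      qed
      have fsA: "\<forall>i\<in>{1..k}. fs i \<in> A" using GA eQ by (simp add: fs_def)
      have k2r: "k \<in> {2..r}" using k2 kr by simp
      have mix: "\<bar>(\<integral>x. (\<Prod>i\<in>{1..k}. hact act (hs i) (fs i) x) \<partial>M) - (\<Prod>i\<in>{1..k}. (\<integral>x. fs i x \<partial>M))\<bar>
        \<le> Em * exp (- \<delta> k * Min {dist (hs i) (hs j) | i j. i \<in> {1..k} \<and> j \<in> {1..k} \<and> i \<noteq> j})
            * (\<Prod>i\<in>{1..k}. N s0 (fs i))" using Em(2) k2r fsA by blast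
      have "Q' \<noteq> {}" using k2 by (auto simp: k_def)
      then have "I \<noteq> {}" by (auto simp: Q'_def)
      have eq1: "(\<integral>x. (\<Prod>i\<in>{1..k}. hact act (hs i) (fs i) x) \<partial>M) = psi M act f h I"
      proof -
        have "(\<integral>x. (\<Prod>i\<in>{1..k}. hact act (hs i) (fs i) x) \<partial>M) = (\<integral>x. (\<Prod>i\<in>I. hact act (h i) f x) \<partial>M)"
        proof (rule Bochner_Integration.integral_cong[OF refl])
          fix x assume x: "x \<in> space M"
          have "(\<Prod>i\<in>{1..k}. hact act (hs i) (fs i) x) = (\<Prod>J\<in>Q'. hact act (h (rep J)) (G J) x)"
            unfolding hs_def fs_def using e by (rule prod.reindex_bij_betw)
          also have "\<dots> = (\<Prod>J\<in>Q'. \<Prod>i\<in>I \<inter> J. hact act (h i) f x)"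
            unfolding G_def by (intro prod.cong refl hact_shift[of M act]) (use act_plus x in auto)
          also have "\<dots> = (\<Prod>i\<in>(\<Union>J\<in>Q'. I \<inter> J). hact act (h i) f x)"
            using finQ' finI Qdisj2 Q'Q by (intro prod.UNION_disjoint[symmetric]) auto
          also have "(\<Union>J\<in>Q'. I \<inter> J) = I" by (rule I_eq[symmetric])
          finally show "(\<Prod>i\<in>{1..k}. hact act (hs i) (fs i) x) = (\<Prod>i\<in>I. hact act (h i) f x)" .
        qed
        then show ?thesis using \<open>I \<noteq> {}\<close> by (simp add: psi_def)
      qed
      have eq2: "(\<Prod>i\<in>{1..k}. (\<integral>x. fs i x \<partial>M)) = psiQ M act f h Q I"
      proof -
        have "(\<Prod>i\<in>{1..k}. (\<integral>x. fs i x \<partial>M)) = (\<Prod>J\<in>Q'. (\<integral>x. G J x \<partial>M))"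
          unfolding fs_def using e by (rule prod.reindex_bij_betw)
        also have "\<dots> = (\<Prod>J\<in>Q'. psi M act f h (I \<inter> J))"
        proof (rule prod.cong[OF refl])
          fix J assume J: "J \<in> Q'"
          have "psi M act f h (I \<inter> J) = (\<integral>x. (\<Prod>i\<in>I \<inter> J. hact act (h i) f x) \<partial>M)"
            using J by (simp add: psi_def Q'_def)
          also have "\<dots> = (\<integral>x. hact act (h (rep J)) (G J) x \<partial>M)"
            unfolding G_def by (rule Bochner_Integration.integral_cong[OF refl], rule hact_shift[symmetric, of M act])
              (use act_plus in auto)
          also have "\<dots> = (\<integral>x. G J x \<partial>M)"
            using integral_hact[of act M "G J" "h (rep J)"] act_mp A_Linf GA[OF J] by blast
          finally show "(\<integral>x. G J x \<partial>M) = psi M act f h (I \<inter> J)" by simp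
        qed
        finally show ?thesis using psiQ_eq by simp
      qed
      define Ds where "Ds = {dist (hs i) (hs j) | i j. i \<in> {1..k} \<and> j \<in> {1..k} \<and> i \<noteq> j}"
      have Dsfin: "finite Ds"
      proof -
        have "Ds \<subseteq> (\<lambda>(i,j). dist (hs i) (hs j)) ` ({1..k} \<times> {1..k})" by (auto simp: Ds_def)
        thus ?thesis by (rule finite_subset) simp
      qed
      have "dist (hs 1) (hs 2) \<in> Ds" using k2 unfolding Ds_def by force
      then have Dsne: "Ds \<noteq> {}" by auto
      have Dsgt: "\<forall>d\<in>Ds. \<beta> < d"
      proof
        fix d assume "d \<in> Ds"
        then obtain i j where ij: "i \<in> {1..k}" "j \<in> {1..k}" "i \<noteq> j" "d = dist (hs i) (hs j)"
          by (auto simp: Ds_def)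
        have "e i \<noteq> e j" using ij bij_betw_imp_inj_on[OF e] by (metis inj_on_eq_iff)
        moreover have "e i \<in> Q" "e j \<in> Q" using eQ ij Q'Q by auto
        moreover have "rep (e i) \<in> e i" "rep (e j) \<in> e j" using rep eQ ij by auto
        ultimately show "\<beta> < d" using dlowJ[of "e i" "e j" "rep (e i)" "rep (e j)"] ij(4)
          by (simp add: hs_def)
      qed
      have Minb: "\<beta> \<le> Min Ds" using Dsfin Dsne Dsgt by (auto simp: Min_ge_iff intro: less_imp_le)
      have b0: "0 \<le> \<beta>" using a0 ab by simp
      have dk: "\<delta> r \<le> \<delta> k" using \<delta>_antimono[of k r] k2 kr by simp
      have expb: "exp (- \<delta> k * Min Ds) \<le> exp (- \<delta> r * \<beta>)"
      proof -
        have "\<delta> r * \<beta> \<le> \<delta> k * \<beta>" using dk b0 by (intro mult_right_mono)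
        also have "\<dots> \<le> \<delta> k * Min Ds" using Minb \<delta>r dk by (intro mult_left_mono) auto
        finally show ?thesis by simp
      qed
      define nI where "nI J = card (I \<inter> J)" for J
      have Nfs: "N s0 (fs i) \<le> B * exp (real (nI (e i)) * \<sigma> s * \<alpha>) * N s f ^ nI (e i)" if i: "i \<in> {1..k}" for i
      proof -
        have J: "e i \<in> Q'" using eQ i .
        have "I \<inter> e i \<noteq> {}" using J by (simp add: Q'_def)
        hence "1 \<le> nI (e i)" using finI by (simp add: nI_def card_gt_0_iff Suc_le_eq)
        moreover have "nI (e i) \<le> r" unfolding nI_def using card_mono[of "{1..r}" "I \<inter> e i"] IS by auto
        ultimately have n1: "nI (e i) \<in> {1..r}" by simp
        have dc: "\<forall>i'\<in>I \<inter> e i. dist (- h (rep (e i)) + h i') (0::'h) \<le> \<alpha>"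
        proof
          fix i' assume i': "i' \<in> I \<inter> e i"
          have "dist (- h (rep (e i)) + h i') (0::'h) = dist (h i') (h (rep (e i)))"
            by (rule dist_shift[OF d_leftinv])
          also have "\<dots> \<le> \<alpha>" using dupJ[of "e i" i' "rep (e i)"] i' rep[OF J] J Q'Q by auto
          finally show "dist (- h (rep (e i)) + h i') (0::'h) \<le> \<alpha>" .
        qed
        note D1 = bspec[OF Db(2) n1]
        note D2 = spec[OF spec[OF spec[OF spec[OF D1, of \<alpha>], of "I \<inter> e i"], of "\<lambda>i'. - h (rep (e i)) + h i'"], of f]
        have fin: "finite (I \<inter> e i)" using finI by simp
        have cd: "card (I \<inter> e i) = nI (e i)" by (simp add: nI_def)
        have "N s0 (fs i) \<le> Db * exp (real (nI (e i)) * \<sigma> s * \<alpha>) * N s f ^ nI (e i)"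
          using mp[OF mp[OF mp[OF mp[OF mp[OF D2 a0] fin] cd] f] dc] by (simp add: fs_def G_def)
        also have "\<dots> \<le> B * exp (real (nI (e i)) * \<sigma> s * \<alpha>) * N s f ^ nI (e i)"
          using Nf by (intro mult_right_mono) (auto simp: B_def)
        finally show ?thesis .
      qed
      have "(\<Prod>i\<in>{1..k}. N s0 (fs i)) \<le> (\<Prod>i\<in>{1..k}. B * exp (real (nI (e i)) * \<sigma> s * \<alpha>) * N s f ^ nI (e i))"
        by (rule prod_mono) (use Nfs fsA N_nonneg s01 in auto)
      also have "\<dots> = (\<Prod>J\<in>Q'. B * exp (real (nI J) * \<sigma> s * \<alpha>) * N s f ^ nI J)"
        using e by (rule prod.reindex_bij_betw)
      also have "\<dots> = B ^ k * exp (real (card I) * \<sigma> s * \<alpha>) * N s f ^ card I"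
      proof -
        have sumI: "(\<Sum>J\<in>Q'. nI J) = card I"
        proof -
          have "card (\<Union>J\<in>Q'. I \<inter> J) = (\<Sum>J\<in>Q'. card (I \<inter> J))"
            using finQ' finI Qdisj2 Q'Q by (intro card_UN_disjoint) auto
          moreover from I_eq have "card I = card (\<Union>J\<in>Q'. I \<inter> J)" by (rule arg_cong)
          ultimately show ?thesis by (simp add: nI_def)
        qed
        have "(\<Prod>J\<in>Q'. B * exp (real (nI J) * \<sigma> s * \<alpha>) * N s f ^ nI J)
            = (\<Prod>J\<in>Q'. B) * (\<Prod>J\<in>Q'. exp (real (nI J) * \<sigma> s * \<alpha>)) * (\<Prod>J\<in>Q'. N s f ^ nI J)"
          by (simp add: prod.distrib)
        also have "(\<Prod>J\<in>Q'. B) = B ^ k" by (simp add: k_def)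
        also have "(\<Prod>J\<in>Q'. exp (real (nI J) * \<sigma> s * \<alpha>)) = exp (\<Sum>J\<in>Q'. real (nI J) * \<sigma> s * \<alpha>)"
          using finQ' by (simp add: exp_sum)
        also have "(\<Sum>J\<in>Q'. real (nI J) * \<sigma> s * \<alpha>) = real (\<Sum>J\<in>Q'. nI J) * \<sigma> s * \<alpha>"
          by (simp add: sum_distrib_right)
        also have "(\<Prod>J\<in>Q'. N s f ^ nI J) = N s f ^ (\<Sum>J\<in>Q'. nI J)"
          by (rule power_sum[symmetric])
        finally show ?thesis using sumI by simp
      qed
      finally have NB: "(\<Prod>i\<in>{1..k}. N s0 (fs i)) \<le> B ^ k * exp (real (card I) * \<sigma> s * \<alpha>) * N s f ^ card I" .
      have NB2: "B ^ k * exp (real (card I) * \<sigma> s * \<alpha>) * N s f ^ card I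
          \<le> B ^ r * exp (real r * \<sigma> s * \<alpha>) * N s f ^ card I"
      proof -
        have "B ^ k \<le> B ^ r" using B1 kr by (intro power_increasing)
        moreover have "exp (real (card I) * \<sigma> s * \<alpha>) \<le> exp (real r * \<sigma> s * \<alpha>)"
        proof -
          have "real (card I) * \<sigma> s \<le> real r * \<sigma> s" using cIr \<sigma>s by (intro mult_right_mono) auto
          hence "real (card I) * \<sigma> s * \<alpha> \<le> real r * \<sigma> s * \<alpha>" by (rule mult_right_mono[OF _ a0])
          thus ?thesis by simp
        qed
        ultimately show ?thesis using Nf B1 by (intro mult_right_mono mult_mono) auto
      qed
      have P0: "0 \<le> (\<Prod>i\<in>{1..k}. N s0 (fs i))" using fsA N_nonneg s01 by (intro prod_nonneg) auto
      have "\<bar>psi M act f h I - psiQ M act f h Q I\<bar>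
          = \<bar>(\<integral>x. (\<Prod>i\<in>{1..k}. hact act (hs i) (fs i) x) \<partial>M) - (\<Prod>i\<in>{1..k}. (\<integral>x. fs i x \<partial>M))\<bar>"
        using eq1 eq2 by simp
      also have "\<dots> \<le> Em * exp (- \<delta> k * Min Ds) * (\<Prod>i\<in>{1..k}. N s0 (fs i))"
        using mix unfolding Ds_def .
      also have "\<dots> \<le> Em * exp (- \<delta> r * \<beta>) * (B ^ r * exp (real r * \<sigma> s * \<alpha>) * N s f ^ card I)"
        using Em(1) expb NB NB2 P0 by (intro mult_mono) auto
      also have "\<dots> = C * (exp (- \<delta> r * \<beta>) * exp (real r * \<sigma> s * \<alpha>)) * N s f ^ card I"
        by (simp add: C_def mult_ac)
      also have "exp (- \<delta> r * \<beta>) * exp (real r * \<sigma> s * \<alpha>) = exp (- (\<beta> * \<delta> r - real r * \<alpha> * \<sigma> s))"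
        by (simp add: exp_add[symmetric] algebra_simps)
      finally show ?thesis .
    qed
      qed
  qed
qed

end
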